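(* Let $m \geq 2$ be an integer, let $k \in \{1, 2, \ldots, m-1\}$, and let $p \in \left(\frac{k}{m}, \frac{k+1}{m}\right]$. Then $$\mathbb{P}_{X \sim B(m,p)}\big[X \geq mp\big] \;\geq\; \mathbb{P}_{X \sim B(m,\frac{k}{m})}\big[X \geq k+1\big].$$
   Context: $B(m,p)$ denotes the binomial distribution with $m$ trials and success probability $p$: $\mathbb{P}[X=j]=\binom{m}{j}p^j(1-p)^{m-j}$ for $j=0,\dots,m$; its mean is $mp$. *)

theory Defs
  imports "HOL-Probability.Probability"
begin

end

theory Submission imports Defs begin
lemma binrec:
  assumes p: "0 \<le> p" "p \<le> 1"
  shows "measure_pmf.prob (binomial_pmf (Suc n) p) A =
     p * measure_pmf.prob (binomial_pmf n p) (Suc -` A) + (1-p) * measure_pmf.prob (binomial_pmf n p) A"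
proof -
  have eq: "binomial_pmf (Suc n) p = bernoulli_pmf p \<bind> (\<lambda>b. map_pmf (\<lambda>k. (if b then 1 else 0)+k) (binomial_pmf n p))"
    using p by (simp add: binomial_pmf_Suc map_pmf_def)
  have "emeasure (measure_pmf (binomial_pmf (Suc n) p)) A =
     ennreal (measure_pmf.prob (binomial_pmf n p) (Suc -` A)) * ennreal p + ennreal (measure_pmf.prob (binomial_pmf n p) A) * ennreal (1-p)"
    unfolding eq using p
    apply (simp only: emeasure_bind_pmf nn_integral_bernoulli_pmf emeasure_map_pmf)
    apply (simp add: measure_pmf.emeasure_eq_measure)
    apply (subgoal_tac "(+) (Suc 0) -` A = Suc -` A" "(+) (0::nat) -` A = A")
      apply simp
     apply auto
    done
  also have "\<dots> = ennreal (p * measure_pmf.prob (binomial_pmf n p) (Suc -` A) + (1-p) * measure_pmf.prob (binomial_pmf n p) A)"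
    using p by (simp add: ennreal_mult' ennreal_plus mult.commute)
  finally have *: "ennreal (measure_pmf.prob (binomial_pmf (Suc n) p) A) = ennreal (p * measure_pmf.prob (binomial_pmf n p) (Suc -` A) + (1-p) * measure_pmf.prob (binomial_pmf n p) A)"
    by (simp add: measure_pmf.emeasure_eq_measure)
  have "0 \<le> p * measure_pmf.prob (binomial_pmf n p) (Suc -` A) + (1-p) * measure_pmf.prob (binomial_pmf n p) A"
    using p by (intro add_nonneg_nonneg mult_nonneg_nonneg) auto
  with * show ?thesis by (simp add: ennreal_inj)
qed
lemma binmono:
  assumes "0 \<le> p" "p \<le> q" "q \<le> 1"
  shows "measure_pmf.prob (binomial_pmf n p) {x. j \<le> x} \<le> measure_pmf.prob (binomial_pmf n q) {x. j \<le> x}"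
  using assms
proof (induction n arbitrary: j)
  case 0
  then show ?case by (simp add: binomial_pmf_0)
next
  case (Suc n)
  have pre: "Suc -` {x. j \<le> x} = {x. j - 1 \<le> x}" by auto
  define a where "a = measure_pmf.prob (binomial_pmf n p) {x. j \<le> x}"
  define b where "b = measure_pmf.prob (binomial_pmf n p) {x. j - 1 \<le> x}"
  define a' where "a' = measure_pmf.prob (binomial_pmf n q) {x. j \<le> x}"
  define b' where "b' = measure_pmf.prob (binomial_pmf n q) {x. j - 1 \<le> x}"
  have ab: "a \<le> b" unfolding a_def b_def by (intro measure_pmf.finite_measure_mono) auto
  have aa: "a \<le> a'" unfolding a_def a'_def by (rule Suc.IH[OF Suc.prems])
  have bb: "b \<le> b'" unfolding b_def b'_def by (rule Suc.IH[OF Suc.prems])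
  have L: "measure_pmf.prob (binomial_pmf (Suc n) p) {x. j \<le> x} = p * b + (1-p) * a"
    using binrec[of p n "{x. j \<le> x}", unfolded pre] Suc.prems unfolding a_def b_def by simp
  have R: "measure_pmf.prob (binomial_pmf (Suc n) q) {x. j \<le> x} = q * b' + (1-q) * a'"
    using binrec[of q n "{x. j \<le> x}", unfolded pre] Suc.prems unfolding a'_def b'_def by simp
  have "p * b + (1-p) * a = a + p * (b - a)" by (simp add: algebra_simps)
  also have "\<dots> \<le> a + q * (b - a)" using ab Suc.prems by (intro add_left_mono mult_right_mono) auto
  also have "\<dots> = q * b + (1-q) * a" by (simp add: algebra_simps)
  also have "\<dots> \<le> q * b' + (1-q) * a'" using aa bb Suc.prems
    by (intro add_mono mult_left_mono) auto
  finally show ?case using L R by simp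
qed

theorem lemma1:
  fixes m k :: nat and p :: real
  assumes "m \<ge> 2" and "1 \<le> k" and "k \<le> m - 1"
    and "real k / real m < p" and "p \<le> (real k + 1) / real m"
  shows "measure_pmf.prob (binomial_pmf m p) {x. real x \<ge> real m * p}
           \<ge> measure_pmf.prob (binomial_pmf m (real k / real m)) {x. x \<ge> k + 1}"
proof -
  have m0: "real m > 0" using assms(1) by simp
  have mp1: "real k < real m * p" using assms(4) m0 by (simp add: field_simps)
  have mp2: "real m * p \<le> real k + 1" using assms(5) m0 by (simp add: field_simps)
  have k1: "real k + 1 \<le> real m" using assms(1,3) by linarith
  have "real m * p \<le> real m * 1" using mp2 k1 by linarith
  then have p1: "p \<le> 1" using m0 mult_le_cancel_left_pos by blast
  have kk: "0 \<le> real k / real m" by simp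
  have set: "{x. real x \<ge> real m * p} = {x. x \<ge> k + 1}"
  proof (intro set_eqI iffI; simp)
    fix x :: nat assume "real m * p \<le> real x"
    then have "real k < real x" using mp1 by linarith
    then show "Suc k \<le> x" by simp
  next
    fix x :: nat assume "Suc k \<le> x"
    then have "real k + 1 \<le> real x" by simp
    then show "real m * p \<le> real x" using mp2 by linarith
  qed
  show ?thesis unfolding set
    using binmono[of "real k / real m" p m "k+1"] kk assms(4) p1 by simp
qed
end
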